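(* Let $C_{sp}(E)$ be as in the context, let $\Delta_n\ge0$ be constants and $c_n$ bounded functions, $n\in\mathbb{N}_0$, and let $T_n:C_{sp}(E)\to C_{sp}(E)$ be operators such that (i) $\|T_nv_1-T_nv_2\|_{sp}\le\Delta_n\|v_1-v_2\|_{sp}$ for all $v_1,v_2\in C_{sp}(E)$; (ii) $\|T_n0\|_{sp}\le\|c_n\|_{sp}$; (iii) for each $n$, $\lim_{k\to\infty}\Delta_n\Delta_{n+1}\cdots\Delta_{n+k}=0$; (iv) $R_n:=\|c_n\|_{sp}+\sum_{i=0}^\infty\Delta_n\cdots\Delta_{n+i}\|c_{n+i+1}\|_{sp}<\infty$ for each $n$. Then there is a sequence $w_n\in C_{sp}(E)$ with $\|T_nw_{n+1}-w_n\|_{sp}=0$ for $n=0,1,\ldots$. Moreover $\|w_n\|_{sp}\le R_n$ and for all $n$ and $k\ge1$ $$\|T_nT_{n+1}\cdots T_{n+k-1}0-w_n\|_{sp}\le\Delta_n\cdots\Delta_{n+k-1}\|w_{n+k}\|_{sp}.$$ Furthermore, when $\sup_n\|w_n\|_{sp}<\infty$, the $w_n$ are unique up to an additive constant, in the sense that any sequence $\tilde w_n\in C_{sp}(E)$ with $\|T_n\tilde w_{n+1}-\tilde w_n\|_{sp}=0$ for all $n$ and $\sup_n\|\tilde w_n\|_{sp}<\infty$ satisfies $\|\tilde w_n-w_n\|_{sp}=0$ for all $n$.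
   Context: $E$ is a complete separable metric space, $U$ a set, $C(E)$ the bounded continuous real functions on $E$. The span seminorm is $\|v\|_{sp}=\sup_{x,x'\in E}(v(x)-v(x'))$; $C_{sp}(E)$ is the quotient of $C(E)$ by the relation $v_1\equiv v_2$ iff $\|v_1-v_2\|_{sp}=0$ (i.e. modulo constants), normed by $\|\cdot\|_{sp}$. For a bounded $c_n:E\times U\to\mathbb{R}$, $\|c_n\|_{sp}=\sup_{x,x'\in E}\sup_{a,a'\in U}(c_n(x,a)-c_n(x',a'))$. *)

theory Defs
  imports "HOL-Analysis.Analysis"
begin

text \<open>Span seminorm on bounded continuous functions C(E).  C_sp(E) is represented
  by C(E) with all statements made modulo the seminorm (equality in C_sp means
  span seminorm of the difference is 0).\<close>
definition sp_norm :: "('e::metric_space \<Rightarrow>\<^sub>C real) \<Rightarrow> real" where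
  "sp_norm v = (SUP p. apply_bcontfun v (fst p) - apply_bcontfun v (snd p))"

definition sp_cost :: "('e \<Rightarrow> 'u \<Rightarrow> real) \<Rightarrow> real" where
  "sp_cost c = (SUP p. c (fst (fst p)) (snd (fst p)) - c (fst (snd p)) (snd (snd p)))"

fun iter_T :: "(nat \<Rightarrow> 'a \<Rightarrow> 'a) \<Rightarrow> nat \<Rightarrow> nat \<Rightarrow> 'a \<Rightarrow> 'a" where
  "iter_T T n 0 v = v"
| "iter_T T n (Suc k) v = T n (iter_T T (Suc n) k v)"

end

theory Submission imports Defs begin

lemma sp_bdd: "bdd_above (range (\<lambda>p. apply_bcontfun (v::'e::metric_space \<Rightarrow>\<^sub>C real) (fst p) - v (snd p)))"
proof -
  have "\<And>p. apply_bcontfun v (fst p) - v (snd p) \<le> 2 * norm v"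
    using norm_bounded[of v] by (smt (verit) real_norm_def)
  then show ?thesis by (intro bdd_aboveI2) auto
qed

lemma sp_upper: "apply_bcontfun v x - v y \<le> sp_norm (v::'e::metric_space \<Rightarrow>\<^sub>C real)"
proof -
  have "(\<lambda>p. apply_bcontfun v (fst p) - v (snd p)) (x,y) \<le> (SUP p. apply_bcontfun v (fst p) - v (snd p))"
    by (rule cSUP_upper[OF UNIV_I sp_bdd])
  then show ?thesis unfolding sp_norm_def by simp
qed

lemma sp_least: "(\<And>x y. apply_bcontfun v x - v y \<le> B) \<Longrightarrow> sp_norm (v::'e::metric_space \<Rightarrow>\<^sub>C real) \<le> B"
  unfolding sp_norm_def by (rule cSUP_least) auto

lemma sp_nonneg: "0 \<le> sp_norm (v::'e::metric_space \<Rightarrow>\<^sub>C real)"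
  using sp_upper[of v undefined undefined] by simp

lemma sp_le_norm: "sp_norm (v::'e::metric_space \<Rightarrow>\<^sub>C real) \<le> 2 * norm v"
  using norm_bounded[of v] by (intro sp_least) (smt (verit) real_norm_def)

lemma sp_add: "sp_norm (u + v) \<le> sp_norm u + sp_norm (v::'e::metric_space \<Rightarrow>\<^sub>C real)"
proof (rule sp_least)
  fix x y
  show "apply_bcontfun (u + v) x - (u + v) y \<le> sp_norm u + sp_norm v"
    using sp_upper[of u x y] sp_upper[of v x y] by simp
qed

lemma sp_diff_tri: "sp_norm (u - w) \<le> sp_norm (u - v) + sp_norm (v - (w::'e::metric_space \<Rightarrow>\<^sub>C real))"
  using sp_add[of "u - v" "v - w"] by simp

lemma sp_commute: "sp_norm (u - v) = sp_norm (v - (u::'e::metric_space \<Rightarrow>\<^sub>C real))"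
proof -
  have "sp_norm (u - v) \<le> sp_norm (v - u)" for u v :: "'e \<Rightarrow>\<^sub>C real"
  proof (rule sp_least)
    fix x y show "apply_bcontfun (u - v) x - (u - v) y \<le> sp_norm (v - u)"
      using sp_upper[of "v - u" y x] by simp
  qed
  then show ?thesis by (meson antisym)
qed

lemma sp_minus0: "sp_norm (0 - v) = sp_norm (v::'e::metric_space \<Rightarrow>\<^sub>C real)"
  using sp_commute[of 0 v] by simp

lemma sp_uminus: "sp_norm (- v) = sp_norm (v::'e::metric_space \<Rightarrow>\<^sub>C real)"
  using sp_minus0[of v] by simp

lemma sp_complete:
  fixes a :: "nat \<Rightarrow> ('e::metric_space \<Rightarrow>\<^sub>C real)"
  assumes C: "\<And>e. e > 0 \<Longrightarrow> \<exists>N. \<forall>m\<ge>N. \<forall>k\<ge>N. sp_norm (a m - a k) < e"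
  shows "\<exists>w. (\<lambda>k. sp_norm (a k - w)) \<longlonglongrightarrow> 0"
proof -
  define x0 :: 'e where "x0 = undefined"
  define u where "u k = a k - const_bcontfun (apply_bcontfun (a k) x0)" for k
  have du: "dist (u m) (u k) \<le> sp_norm (a m - a k)" for m k
  proof (rule dist_bound)
    fix x
    show "dist (apply_bcontfun (u m) x) (u k x) \<le> sp_norm (a m - a k)"
      using sp_upper[of "a m - a k" x x0] sp_upper[of "a m - a k" x0 x]
      by (simp add: u_def dist_real_def abs_le_iff)
  qed
  have "Cauchy u"
  proof (rule metric_CauchyI)
    fix e :: real assume "e > 0"
    then obtain N where "\<forall>m\<ge>N. \<forall>k\<ge>N. sp_norm (a m - a k) < e" using C by blast
    then show "\<exists>M. \<forall>m\<ge>M. \<forall>n\<ge>M. dist (u m) (u n) < e"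
      using du by (meson le_less_trans)
  qed
  then obtain w where w: "u \<longlonglongrightarrow> w" using convergent_eq_Cauchy by blast
  have eq: "sp_norm (a k - w) = sp_norm (u k - w)" for k
  proof -
    have "sp_norm (a k - w) \<le> sp_norm (u k - w)" "sp_norm (u k - w) \<le> sp_norm (a k - w)"
       apply (rule sp_least) subgoal for x y using sp_upper[of "u k - w" x y] by (simp add: u_def)
      apply (rule sp_least) subgoal for x y using sp_upper[of "a k - w" x y] by (simp add: u_def)
      done
    then show ?thesis by simp
  qed
  have "(\<lambda>k. norm (u k - w)) \<longlonglongrightarrow> 0" using LIM_zero[OF w] tendsto_norm_zero by blast
  then have "(\<lambda>k. 2 * norm (u k - w)) \<longlonglongrightarrow> 2 * 0" by (intro tendsto_mult tendsto_const)
  then have "(\<lambda>k. 2 * norm (u k - w)) \<longlonglongrightarrow> 0" by simp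
  then have "(\<lambda>k. sp_norm (u k - w)) \<longlonglongrightarrow> 0"
    by (rule real_tendsto_sandwich[rotated 2, OF tendsto_const]) (auto intro!: always_eventually sp_nonneg sp_le_norm)
  then show ?thesis by (simp only: eq[symmetric]) blast
qed


lemma iter_T_Suc': "iter_T T n (Suc k) v = iter_T T n k (T (n + k) v)"
  by (induction k arbitrary: n) auto

lemma iter_lip:
  fixes T :: "nat \<Rightarrow> ('e::metric_space \<Rightarrow>\<^sub>C real) \<Rightarrow> ('e \<Rightarrow>\<^sub>C real)"
  assumes Dn: "\<And>n. \<Delta> n \<ge> 0"
    and lip: "\<And>n v1 v2. sp_norm (T n v1 - T n v2) \<le> \<Delta> n * sp_norm (v1 - v2)"
  shows "sp_norm (iter_T T n k u - iter_T T n k v) \<le> (\<Prod>j<k. \<Delta> (n + j)) * sp_norm (u - v)"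
proof (induction k arbitrary: n)
  case 0 then show ?case by simp
next
  case (Suc k)
  have "sp_norm (iter_T T n (Suc k) u - iter_T T n (Suc k) v)
      \<le> \<Delta> n * sp_norm (iter_T T (Suc n) k u - iter_T T (Suc n) k v)" using lip by simp
  also have "\<dots> \<le> \<Delta> n * ((\<Prod>j<k. \<Delta> (Suc n + j)) * sp_norm (u - v))"
    using Suc.IH[of "Suc n"] Dn by (simp add: mult_left_mono)
  also have "\<dots> = (\<Prod>j<Suc k. \<Delta> (n + j)) * sp_norm (u - v)"
    unfolding prod.lessThan_Suc_shift by (simp add: mult.assoc)
  finally show ?case .
qed

lemma iter_fix:
  fixes T :: "nat \<Rightarrow> ('e::metric_space \<Rightarrow>\<^sub>C real) \<Rightarrow> ('e \<Rightarrow>\<^sub>C real)"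
  assumes Dn: "\<And>n. \<Delta> n \<ge> 0"
    and lip: "\<And>n v1 v2. sp_norm (T n v1 - T n v2) \<le> \<Delta> n * sp_norm (v1 - v2)"
    and fx: "\<And>n. sp_norm (T n (w (Suc n)) - w n) = 0"
  shows "sp_norm (iter_T T n k (w (n + k)) - w n) = 0"
proof (induction k arbitrary: n)
  case 0 then show ?case by (simp add: sp_norm_def)
next
  case (Suc k)
  have "sp_norm (iter_T T n (Suc k) (w (n + Suc k)) - w n)
     \<le> sp_norm (T n (iter_T T (Suc n) k (w (Suc n + k))) - T n (w (Suc n))) + sp_norm (T n (w (Suc n)) - w n)"
    using sp_diff_tri by simp
  also have "\<dots> \<le> \<Delta> n * sp_norm (iter_T T (Suc n) k (w (Suc n + k)) - w (Suc n)) + 0"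
    using lip fx by simp
  also have "\<dots> = 0" using Suc.IH[of "Suc n"] by simp
  finally show ?case using sp_nonneg by (meson antisym)
qed

lemma le0_lim:
  fixes X :: "nat \<Rightarrow> real"
  assumes "X \<longlonglongrightarrow> 0" "\<And>k. x \<le> X k"
  shows "x \<le> 0"
  using LIMSEQ_le_const[OF assms(1)] assms(2) by blast

theorem theorem2:
  fixes T :: "nat \<Rightarrow> ('e::polish_space \<Rightarrow>\<^sub>C real) \<Rightarrow> ('e \<Rightarrow>\<^sub>C real)"
    and \<Delta> :: "nat \<Rightarrow> real"
    and c :: "nat \<Rightarrow> 'e \<Rightarrow> 'u \<Rightarrow> real"
    and R :: "nat \<Rightarrow> real"
  assumes Delta_nonneg: "\<And>n. \<Delta> n \<ge> 0"
    and c_bounded: "\<And>n. bounded (range (\<lambda>p. c n (fst p) (snd p)))"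
    and lip: "\<And>n v1 v2. sp_norm (T n v1 - T n v2) \<le> \<Delta> n * sp_norm (v1 - v2)"
    and T0: "\<And>n. sp_norm (T n 0) \<le> sp_cost (c n)"
    and prod_lim: "\<And>n. (\<lambda>k. \<Prod>j\<le>k. \<Delta> (n + j)) \<longlonglongrightarrow> 0"
    and R_fin: "\<And>n. summable (\<lambda>i. (\<Prod>j\<le>i. \<Delta> (n + j)) * sp_cost (c (n + i + 1)))"
    and R_def: "\<And>n. R n = sp_cost (c n) + (\<Sum>i. (\<Prod>j\<le>i. \<Delta> (n + j)) * sp_cost (c (n + i + 1)))"
  shows "\<exists>w :: nat \<Rightarrow> ('e \<Rightarrow>\<^sub>C real).
           (\<forall>n. sp_norm (T n (w (Suc n)) - w n) = 0)
         \<and> (\<forall>n. sp_norm (w n) \<le> R n)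
         \<and> (\<forall>n k. k \<ge> 1 \<longrightarrow>
               sp_norm (iter_T T n k 0 - w n) \<le> (\<Prod>j<k. \<Delta> (n + j)) * sp_norm (w (n + k)))
         \<and> (bdd_above (range (\<lambda>n. sp_norm (w n))) \<longrightarrow>
              (\<forall>w' :: nat \<Rightarrow> ('e \<Rightarrow>\<^sub>C real).
                 (\<forall>n. sp_norm (T n (w' (Suc n)) - w' n) = 0)
                 \<and> bdd_above (range (\<lambda>n. sp_norm (w' n)))
                 \<longrightarrow> (\<forall>n. sp_norm (w' n - w n) = 0)))"
proof -
  define a where "a n k = iter_T T n k 0" for n k
  define b where "b n k = (\<Prod>j<k. \<Delta> (n + j)) * sp_cost (c (n + k))" for n k
  have b_nonneg: "b n k \<ge> 0" for n k
    unfolding b_def using T0[of "n+k"] sp_nonneg[of "T (n+k) 0"] Delta_nonneg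
    by (intro mult_nonneg_nonneg prod_nonneg) auto
  have bsuc: "(\<lambda>i. b n (Suc i)) = (\<lambda>i. (\<Prod>j\<le>i. \<Delta> (n + j)) * sp_cost (c (n + i + 1)))" for n
    unfolding b_def by (auto simp: lessThan_Suc_atMost)
  have bsum: "summable (b n)" for n
    using R_fin[of n] unfolding bsuc[symmetric] by (simp add: summable_Suc_iff)
  have Rb: "R n = suminf (b n)" for n
    using suminf_split_head[OF bsum[of n]] R_def[of n] bsuc[of n] by (simp add: b_def)
  have inc: "sp_norm (a n (Suc k) - a n k) \<le> b n k" for n k
  proof -
    have "sp_norm (a n (Suc k) - a n k) \<le> (\<Prod>j<k. \<Delta> (n + j)) * sp_norm (T (n + k) 0 - 0)"
      unfolding a_def iter_T_Suc' by (rule iter_lip[where T=T and \<Delta>=\<Delta>, OF Delta_nonneg lip])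
    also have "\<dots> \<le> b n k" unfolding b_def using T0[of "n+k"] Delta_nonneg
      by (auto intro!: mult_left_mono prod_nonneg)
    finally show ?thesis .
  qed
  have cauchy1: "sp_norm (a n m - a n k) \<le> sum (b n) {k..<m}" if "k \<le> m" for n m k
    using that
  proof (induction m rule: dec_induct)
    case base then show ?case by (simp add: sp_norm_def)
  next
    case (step m)
    have "sp_norm (a n (Suc m) - a n k) \<le> sp_norm (a n (Suc m) - a n m) + sp_norm (a n m - a n k)"
      by (rule sp_diff_tri)
    also have "\<dots> \<le> b n m + sum (b n) {k..<m}" using inc step.IH by (intro add_mono) auto
    also have "\<dots> = sum (b n) {k..<Suc m}" using step.hyps by simp
    finally show ?case .
  qed
  have "\<exists>v. (\<lambda>k. sp_norm (a n k - v)) \<longlonglongrightarrow> 0" for n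
  proof (rule sp_complete)
    fix e :: real assume "e > 0"
    then obtain N where N: "\<forall>m\<ge>N. \<forall>n'. norm (sum (b n) {m..<n'}) < e"
      using bsum[of n] unfolding summable_Cauchy by blast
    have "sp_norm (a n m - a n k) < e" if "m \<ge> N" "k \<ge> N" for m k
    proof (cases "k \<le> m")
      case True
      then show ?thesis using cauchy1[OF True, of n] N that b_nonneg
        by (smt (verit, best) real_norm_def sum_nonneg)
    next
      case False
      then have "m \<le> k" by simp
      then show ?thesis using cauchy1[OF \<open>m \<le> k\<close>, of n] N that b_nonneg sp_commute[of "a n m"]
        by (smt (verit, best) real_norm_def sum_nonneg)
    qed
    then show "\<exists>N. \<forall>m\<ge>N. \<forall>k\<ge>N. sp_norm (a n m - a n k) < e" by blast
  qed
  then obtain w where w: "\<And>n. (\<lambda>k. sp_norm (a n k - w n)) \<longlonglongrightarrow> 0" by metis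
  have fx: "sp_norm (T n (w (Suc n)) - w n) = 0" for n
  proof -
    have "(\<lambda>k. \<Delta> n * sp_norm (a (Suc n) k - w (Suc n)) + sp_norm (a n (Suc k) - w n)) \<longlonglongrightarrow> \<Delta> n * 0 + 0"
      using w[of "Suc n"] w[of n] by (intro tendsto_add tendsto_mult tendsto_const LIMSEQ_Suc)
    moreover have "sp_norm (T n (w (Suc n)) - w n) \<le> \<Delta> n * sp_norm (a (Suc n) k - w (Suc n)) + sp_norm (a n (Suc k) - w n)" for k
    proof -
      have "sp_norm (T n (w (Suc n)) - w n) \<le> sp_norm (T n (w (Suc n)) - T n (a (Suc n) k)) + sp_norm (T n (a (Suc n) k) - w n)"
        by (rule sp_diff_tri)
      also have "\<dots> \<le> \<Delta> n * sp_norm (w (Suc n) - a (Suc n) k) + sp_norm (a n (Suc k) - w n)"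
        using lip by (simp add: a_def)
      finally show ?thesis by (simp add: sp_commute)
    qed
    ultimately have "sp_norm (T n (w (Suc n)) - w n) \<le> 0" by (intro le0_lim) auto
    then show ?thesis using sp_nonneg by (meson antisym)
  qed
  have bound: "sp_norm (w n) \<le> R n" for n
  proof -
    have "sp_norm (w n) - R n \<le> sp_norm (a n k - w n)" for k
    proof -
      have "sp_norm (w n - 0) \<le> sp_norm (w n - a n k) + sp_norm (a n k - a n 0)"
        using sp_diff_tri[of "w n" 0 "a n k"] by (simp add: a_def)
      also have "\<dots> \<le> sp_norm (a n k - w n) + sum (b n) {0..<k}"
        using cauchy1[of 0 k n] by (simp add: sp_commute)
      also have "sum (b n) {0..<k} \<le> R n" unfolding Rb
        using sum_le_suminf[OF bsum, of "{0..<k}"] b_nonneg by auto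
      finally show ?thesis by simp
    qed
    then have "sp_norm (w n) - R n \<le> 0" by (intro le0_lim[OF w])
    then show ?thesis by simp
  qed
  have est: "sp_norm (iter_T T n k 0 - w n) \<le> (\<Prod>j<k. \<Delta> (n + j)) * sp_norm (w (n + k))" for n k
  proof -
    have "sp_norm (iter_T T n k 0 - w n) \<le> sp_norm (iter_T T n k 0 - iter_T T n k (w (n + k))) + sp_norm (iter_T T n k (w (n + k)) - w n)"
      by (rule sp_diff_tri)
    also have "\<dots> \<le> (\<Prod>j<k. \<Delta> (n + j)) * sp_norm (0 - w (n + k)) + 0"
      using iter_lip[where T=T and \<Delta>=\<Delta>, OF Delta_nonneg lip, where n=n and k=k and u=0 and v="w (n+k)"] iter_fix[where T=T and \<Delta>=\<Delta> and w=w, OF Delta_nonneg lip fx, where n=n and k=k] by simp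
    finally show ?thesis by (simp add: sp_uminus)
  qed
  have uniq: "sp_norm (w' n - w n) = 0"
    if B: "bdd_above (range (\<lambda>n. sp_norm (w n)))" and fx': "\<forall>n. sp_norm (T n (w' (Suc n)) - w' n) = 0"
      and B': "bdd_above (range (\<lambda>n. sp_norm (w' n)))" for w' n
  proof -
    obtain M where M: "\<And>n. sp_norm (w n) \<le> M" using B by (auto simp: bdd_above_def)
    obtain M' where M': "\<And>n. sp_norm (w' n) \<le> M'" using B' by (auto simp: bdd_above_def)
    have P: "(\<lambda>k. \<Prod>j<k. \<Delta> (n + j)) \<longlonglongrightarrow> 0"
      using prod_lim[of n] by (intro LIMSEQ_imp_Suc[where f="\<lambda>k. \<Prod>j<k. \<Delta> (n + j)"]) (simp only: lessThan_Suc_atMost)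
    have "(\<lambda>k. (\<Prod>j<k. \<Delta> (n + j)) * (M' + M)) \<longlonglongrightarrow> 0 * (M' + M)"
      by (intro tendsto_mult P tendsto_const)
    moreover have "sp_norm (w' n - w n) \<le> (\<Prod>j<k. \<Delta> (n + j)) * (M' + M)" for k
    proof -
      have "sp_norm (w' n - w n) \<le> sp_norm (w' n - iter_T T n k (w' (n + k))) + sp_norm (iter_T T n k (w' (n + k)) - w n)"
        by (rule sp_diff_tri)
      also have "\<dots> \<le> sp_norm (w' n - iter_T T n k (w' (n + k))) + (sp_norm (iter_T T n k (w' (n + k)) - iter_T T n k (w (n + k))) + sp_norm (iter_T T n k (w (n + k)) - w n))"
        using sp_diff_tri by (intro add_left_mono) 
      also have "\<dots> = sp_norm (iter_T T n k (w' (n + k)) - iter_T T n k (w (n + k)))"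
        using iter_fix[where T=T and \<Delta>=\<Delta> and w=w, OF Delta_nonneg lip fx, where n=n and k=k] iter_fix[where T=T and \<Delta>=\<Delta> and w=w', OF Delta_nonneg lip fx'[rule_format], where n=n and k=k]
        by (simp add: sp_commute)
      also have "\<dots> \<le> (\<Prod>j<k. \<Delta> (n + j)) * sp_norm (w' (n + k) - w (n + k))"
        by (rule iter_lip[where T=T and \<Delta>=\<Delta>, OF Delta_nonneg lip])
      also have "\<dots> \<le> (\<Prod>j<k. \<Delta> (n + j)) * (M' + M)"
      proof (rule mult_left_mono)
        have "sp_norm (w' (n + k) - w (n + k)) \<le> sp_norm (w' (n + k) - 0) + sp_norm (0 - w (n + k))"
          by (rule sp_diff_tri)
        then show "sp_norm (w' (n + k) - w (n + k)) \<le> M' + M"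
          using M[of "n+k"] M'[of "n+k"] by (simp add: sp_uminus)
      qed (use Delta_nonneg in \<open>auto intro: prod_nonneg\<close>)
      finally show ?thesis .
    qed
    ultimately have "sp_norm (w' n - w n) \<le> 0" by (intro le0_lim) auto
    then show ?thesis using sp_nonneg by (meson antisym)
  qed
  show ?thesis
    by (rule exI[of _ w]) (use fx bound est uniq in blast)
qed

end
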